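(* Let $(R,\mathfrak m,k)$ be a one-dimensional analytically irreducible local domain with canonical map $k\to\overline R/\mathfrak n$ an isomorphism, with $v,a_i,n,I_i$ as in the context, and let $1\le i\le n-2$. The following are equivalent: (1) for every $r\in R$ with $v(r)=a_i$, $I_iI_{i+2}=rI_{i+2}$; (2) there exists $q\in R$ with $v(q)=a_i$ and $I_iI_{i+2}=qI_{i+2}$. If moreover $i\le n-3$ and $s\in R$ is an element with $v(s)=a_{i+1}$ and $I_{i+1}I_{i+3}=sI_{i+3}$, then (1) and (2) are also equivalent to: (3) there exists $q\in R$ with $v(q)=a_i$ and $sI_{i+2}\subseteq (q)$.
   Context: $\overline R$ is the integral closure of $R$ in $Q(R)$, assumed finitely generated over $R$ and local with maximal ideal $\mathfrak n$; $v$ is the normalized valuation of $\overline R$; $v(R)=\{a_0=0<a_1<\cdots\}$; $n$ is the smallest integer with $a_{n+i}=a_n+i$ for all $i\ge 0$; $I_j=\{r\in R\mid v(r)\ge a_j\}$ for $0\le j\le n$. *)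

theory Defs
  imports "HOL-Computational_Algebra.Polynomial"
begin

text \<open>All rings are subrings of a fixed field of type 'a, which plays the role of Q(R).\<close>

definition subring :: "'a::field set \<Rightarrow> bool" where
  "subring R \<longleftrightarrow> 0 \<in> R \<and> 1 \<in> R \<and> (\<forall>x\<in>R. \<forall>y\<in>R. x + y \<in> R \<and> x - y \<in> R \<and> x * y \<in> R)"

definition is_ideal :: "'a::field set \<Rightarrow> 'a set \<Rightarrow> bool" where
  "is_ideal R I \<longleftrightarrow> I \<subseteq> R \<and> 0 \<in> I \<and> (\<forall>x\<in>I. \<forall>y\<in>I. x + y \<in> I) \<and> (\<forall>r\<in>R. \<forall>x\<in>I. r * x \<in> I)"

definition is_prime_ideal :: "'a::field set \<Rightarrow> 'a set \<Rightarrow> bool" where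
  "is_prime_ideal R P \<longleftrightarrow> is_ideal R P \<and> P \<noteq> R \<and> (\<forall>x\<in>R. \<forall>y\<in>R. x * y \<in> P \<longrightarrow> x \<in> P \<or> y \<in> P)"

definition is_maximal_ideal :: "'a::field set \<Rightarrow> 'a set \<Rightarrow> bool" where
  "is_maximal_ideal R M \<longleftrightarrow> is_ideal R M \<and> M \<noteq> R \<and> (\<forall>J. is_ideal R J \<and> M \<subseteq> J \<longrightarrow> J = M \<or> J = R)"

definition gen_ideal :: "'a::field set \<Rightarrow> 'a set \<Rightarrow> 'a set" where
  "gen_ideal R S = {sum_list (map (\<lambda>(c, x). c * x) cs) | cs. set cs \<subseteq> R \<times> S}"

definition local_ring :: "'a::field set \<Rightarrow> bool" where
  "local_ring R \<longleftrightarrow> (\<exists>!M. is_maximal_ideal R M)"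

definition noetherian_ring :: "'a::field set \<Rightarrow> bool" where
  "noetherian_ring R \<longleftrightarrow> (\<forall>I. is_ideal R I \<longrightarrow> (\<exists>F. finite F \<and> F \<subseteq> I \<and> I = gen_ideal R F))"

definition krull_dim_one :: "'a::field set \<Rightarrow> bool" where
  "krull_dim_one R \<longleftrightarrow>
     (\<exists>P0 P1. is_prime_ideal R P0 \<and> is_prime_ideal R P1 \<and> P0 \<subset> P1) \<and>
     \<not> (\<exists>P0 P1 P2. is_prime_ideal R P0 \<and> is_prime_ideal R P1 \<and> is_prime_ideal R P2 \<and> P0 \<subset> P1 \<and> P1 \<subset> P2)"

definition is_quotient_field_of :: "'a::field set \<Rightarrow> bool" where
  "is_quotient_field_of R \<longleftrightarrow> (\<forall>x. \<exists>a\<in>R. \<exists>b\<in>R. b \<noteq> 0 \<and> x = a / b)"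

definition integral_closure :: "'a::field set \<Rightarrow> 'a set" where
  "integral_closure R = {x. \<exists>p. lead_coeff p = 1 \<and> (\<forall>i. coeff p i \<in> R) \<and> poly p x = 0}"

definition fin_gen_module :: "'a::field set \<Rightarrow> 'a set \<Rightarrow> bool" where
  "fin_gen_module R S \<longleftrightarrow> (\<exists>B. finite B \<and> S = gen_ideal R B)"

text \<open>v is the normalized discrete valuation of the quotient field whose valuation ring is S
  (its value at 0 is irrelevant and never used).\<close>
definition normalized_valuation_of :: "('a::field \<Rightarrow> int) \<Rightarrow> 'a set \<Rightarrow> bool" where
  "normalized_valuation_of v S \<longleftrightarrow>
     (\<forall>x y. x \<noteq> 0 \<and> y \<noteq> 0 \<longrightarrow> v (x * y) = v x + v y) \<and>
     (\<forall>x y. x \<noteq> 0 \<and> y \<noteq> 0 \<and> x + y \<noteq> 0 \<longrightarrow> v (x + y) \<ge> min (v x) (v y)) \<and>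
     (\<exists>t. t \<noteq> 0 \<and> v t = 1) \<and>
     S = {x. x = 0 \<or> v x \<ge> 0}"

definition ideal_prod :: "'a::field set \<Rightarrow> 'a set \<Rightarrow> 'a set" where
  "ideal_prod A B = {sum_list (map (\<lambda>(x, y). x * y) ps) | ps. set ps \<subseteq> A \<times> B}"

definition smul_set :: "'a::field \<Rightarrow> 'a set \<Rightarrow> 'a set" where
  "smul_set r I = {r * x | x. x \<in> I}"

definition val_ideal :: "'a::field set \<Rightarrow> ('a \<Rightarrow> int) \<Rightarrow> (nat \<Rightarrow> int) \<Rightarrow> nat \<Rightarrow> 'a set" where
  "val_ideal R v a j = {r \<in> R. r = 0 \<or> v r \<ge> a j}"

end

theory Submission
  imports Defs
begin

lemma nv_mult: "normalized_valuation_of v V \<Longrightarrow> x \<noteq> 0 \<Longrightarrow> y \<noteq> 0 \<Longrightarrow> v (x * y) = v x + v y"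
  unfolding normalized_valuation_of_def by blast
lemma nv_add: "normalized_valuation_of v V \<Longrightarrow> x \<noteq> 0 \<Longrightarrow> y \<noteq> 0 \<Longrightarrow> x + y \<noteq> 0 \<Longrightarrow> min (v x) (v y) \<le> v (x + y)"
  unfolding normalized_valuation_of_def by blast
lemma nv_V: "normalized_valuation_of v V \<Longrightarrow> V = {x. x = 0 \<or> v x \<ge> 0}"
  unfolding normalized_valuation_of_def by blast
lemma nv_one: assumes "normalized_valuation_of v V" shows "v 1 = 0"
  using nv_mult[OF assms, of 1 1] by simp
lemma nv_uminus: assumes "normalized_valuation_of v V" shows "v (- x) = v x"
proof (cases "x = 0")
  case True then show ?thesis by simp
next
  case False
  have "v ((-1) * (-1)) = v (-1) + v (-1)" by (rule nv_mult[OF assms]) auto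
  then have m1: "v (-1) = 0" using nv_one[OF assms] by simp
  have "v ((-1) * x) = v (-1) + v x" by (rule nv_mult[OF assms]) (use False in auto)
  then show ?thesis using m1 by simp
qed
lemma nv_div: assumes "normalized_valuation_of v V" "x \<noteq> 0" "y \<noteq> 0" shows "v (x / y) = v x - v y"
proof -
  have "v ((x / y) * y) = v (x / y) + v y" by (rule nv_mult[OF assms(1)]) (use assms in auto)
  then show ?thesis using assms by simp
qed
lemma nv_diff: assumes "normalized_valuation_of v V" "x \<noteq> 0" "y \<noteq> 0" "x - y \<noteq> 0"
  shows "min (v x) (v y) \<le> v (x - y)"
  using nv_add[OF assms(1), of x "-y"] assms nv_uminus[OF assms(1), of y] by simp

lemma residue:
  fixes R V :: "'a::field set"
  assumes val: "normalized_valuation_of v V"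
    and res: "\<forall>N. is_maximal_ideal V N \<longrightarrow> (\<forall>x\<in>V. \<exists>r\<in>R. x - r \<in> N)"
    and x: "x \<noteq> 0" and y: "y \<noteq> 0" and eq: "v x = v y"
  shows "\<exists>c\<in>R. x - c * y = 0 \<or> (x - c * y \<noteq> 0 \<and> v (x - c * y) > v x)"
proof -
  define N where "N = {w::'a. w = 0 \<or> v w > 0}"
  have V: "V = {x. x = 0 \<or> v x \<ge> 0}" by (rule nv_V[OF val])
  have idl: "is_ideal V N"
    unfolding is_ideal_def
  proof (intro conjI ballI)
    show "N \<subseteq> V" using V N_def by auto
    show "0 \<in> N" using N_def by simp
  next
    fix p q assume p: "p \<in> N" and q: "q \<in> N"
    show "p + q \<in> N"
    proof (cases "p = 0 \<or> q = 0 \<or> p + q = 0")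
      case True then show ?thesis using p q N_def by auto
    next
      case False then show ?thesis using nv_add[OF val, of p q] p q N_def by auto
    qed
  next
    fix p q assume "p \<in> V" "q \<in> N"
    then show "p * q \<in> N"
    proof (cases "p = 0 \<or> q = 0")
      case True then show ?thesis using N_def by auto
    next
      case False then show ?thesis using nv_mult[OF val, of p q] \<open>p \<in> V\<close> \<open>q \<in> N\<close> N_def V by auto
    qed
  qed
  have one_V: "1 \<in> V" using V nv_one[OF val] by simp
  have max: "is_maximal_ideal V N"
    unfolding is_maximal_ideal_def
  proof (intro conjI allI impI)
    show "is_ideal V N" by (rule idl)
    show "N \<noteq> V" using one_V N_def nv_one[OF val] by auto
    fix J assume J: "is_ideal V J \<and> N \<subseteq> J"
    show "J = N \<or> J = V"
    proof (cases "J \<subseteq> N")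
      case True then show ?thesis using J by auto
    next
      case False
      then obtain w where w: "w \<in> J" "w \<notin> N" by auto
      have wV: "w \<in> V" using J w unfolding is_ideal_def by auto
      have w0: "w \<noteq> 0" "v w = 0" using w wV V N_def by auto
      have "V \<subseteq> J"
      proof
        fix u assume u: "u \<in> V"
        have "u / w \<in> V"
        proof (cases "u = 0")
          case True then show ?thesis using V by simp
        next
          case False then show ?thesis using nv_div[OF val False w0(1)] w0 u V by auto
        qed
        then have "(u / w) * w \<in> J" using J w unfolding is_ideal_def by blast
        then show "u \<in> J" using w0 by simp
      qed
      then show ?thesis using J unfolding is_ideal_def by auto
    qed
  qed
  have zV: "x / y \<in> V" using nv_div[OF val x y] eq V by auto
  obtain c where c: "c \<in> R" "x / y - c \<in> N" using res max zV by blast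
  have fac: "x - c * y = y * (x / y - c)" using y by (simp add: field_simps)
  show ?thesis
  proof (cases "x / y - c = 0")
    case True then show ?thesis using c fac by auto
  next
    case False
    then have pos: "v (x/y - c) > 0" using c N_def by auto
    have "v (y * (x / y - c)) = v y + v (x/y - c)" using nv_mult[OF val y False] .
    then have g: "v (x - c * y) > v x" using pos eq fac by simp
    have "x - c * y \<noteq> 0" using fac y False by simp
    then show ?thesis using c g by blast
  qed
qed

lemma subring_sum_list: "subring R \<Longrightarrow> set xs \<subseteq> R \<Longrightarrow> sum_list xs \<in> R"
  by (induction xs) (auto simp: subring_def)

lemma subring_prod:
  assumes "subring R" "finite A" "\<And>b. b \<in> A \<Longrightarrow> f b \<in> R" shows "prod f A \<in> R"
  using assms(2,3)
proof (induction A rule: finite_induct)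
  case empty then show ?case using assms(1) by (simp add: subring_def)
next
  case (insert x F) then show ?case using assms(1) by (simp add: subring_def)
qed

lemma scale_sum_in:
  assumes subR: "subring R" and db: "\<forall>b\<in>B. d * b \<in> R"
  shows "set cs \<subseteq> R \<times> B \<Longrightarrow> d * sum_list (map (\<lambda>(c, x). c * x) cs) \<in> R"
proof (induction cs)
  case Nil then show ?case using subR by (simp add: subring_def)
next
  case (Cons p cs)
  obtain c b where p: "p = (c, b)" by fastforce
  have cb: "c \<in> R" "b \<in> B" using Cons.prems p by auto
  have rest: "d * sum_list (map (\<lambda>(c, x). c * x) cs) \<in> R" using Cons by auto
  have "d * sum_list (map (\<lambda>(c, x). c * x) (p # cs)) = c * (d * b) + d * sum_list (map (\<lambda>(c, x). c * x) cs)"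
    using p by (simp add: algebra_simps)
  also have "\<dots> \<in> R" using subR cb db rest unfolding subring_def by blast
  finally show ?case .
qed

lemma conductor:
  fixes R V :: "'a::field set"
  assumes subR: "subring R" and quot: "is_quotient_field_of R"
    and fg: "fin_gen_module R V" and val: "normalized_valuation_of v V"
  shows "\<exists>C. \<forall>y. y \<noteq> 0 \<and> v y \<ge> C \<longrightarrow> y \<in> R"
proof -
  obtain B where B: "finite B" "V = gen_ideal R B" using fg unfolding fin_gen_module_def by blast
  have "\<exists>p. fst p \<in> R \<and> snd p \<in> R \<and> snd p \<noteq> 0 \<and> b = fst p / snd p" for b
  proof -
    obtain \<alpha> \<beta> where ab: "\<alpha> \<in> R" "\<beta> \<in> R" "\<beta> \<noteq> 0" "b = \<alpha> / \<beta>"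
      using quot unfolding is_quotient_field_of_def by blast
    show ?thesis by (rule exI[of _ "(\<alpha>, \<beta>)"]) (use ab in simp)
  qed
  then have "\<exists>f. \<forall>b. fst (f b) \<in> R \<and> snd (f b) \<in> R \<and> snd (f b) \<noteq> 0 \<and> b = fst (f b) / snd (f b)"
    by (rule choice[OF allI])
  then obtain f where f: "\<forall>b. fst (f b) \<in> R \<and> snd (f b) \<in> R \<and> snd (f b) \<noteq> 0 \<and> b = fst (f b) / snd (f b)"
    by blast
  have f1: "fst (f b) \<in> R" and f2: "snd (f b) \<in> R" and f3: "snd (f b) \<noteq> 0"
    and f4: "fst (f b) = snd (f b) * b" for b
  proof -
    show "fst (f b) \<in> R" "snd (f b) \<in> R" "snd (f b) \<noteq> 0" using f by blast+
    have "b = fst (f b) / snd (f b)" "snd (f b) \<noteq> 0" using f by blast+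
    then show "fst (f b) = snd (f b) * b" by (simp add: field_simps)
  qed
  define d where "d = (\<Prod>b\<in>B. snd (f b))"
  have dR: "d \<in> R" unfolding d_def by (rule subring_prod[OF subR B(1)]) (rule f2)
  have d0: "d \<noteq> 0" unfolding d_def using f3 B(1) by simp
  have db: "\<forall>b\<in>B. d * b \<in> R"
  proof
    fix b assume b: "b \<in> B"
    define P where "P = (\<Prod>b'\<in>B - {b}. snd (f b'))"
    have PR: "P \<in> R" unfolding P_def by (rule subring_prod[OF subR]) (use B(1) f2 in auto)
    have "d = snd (f b) * P" unfolding d_def P_def using B(1) b by (simp add: prod.remove)
    then have "d * b = (snd (f b) * b) * P" by simp
    also have "snd (f b) * b = fst (f b)" using f4[of b] by simp
    finally show "d * b \<in> R" using PR f1[of b] subR unfolding subring_def by auto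
  qed
  have dV: "d * x \<in> R" if "x \<in> V" for x
    using that B(2) scale_sum_in[OF subR db] unfolding gen_ideal_def by blast
  have "\<forall>y. y \<noteq> 0 \<and> v y \<ge> v d \<longrightarrow> y \<in> R"
  proof (intro allI impI)
    fix y assume y: "y \<noteq> 0 \<and> v y \<ge> v d"
    have "y / d \<in> V" using nv_V[OF val] nv_div[OF val, of y d] y d0 by auto
    then have "d * (y / d) \<in> R" by (rule dV)
    then show "y \<in> R" using d0 by simp
  qed
  then show ?thesis by blast
qed

lemma approx:
  fixes R V A B :: "'a::field set"
  assumes val: "normalized_valuation_of v V"
    and res: "\<forall>N. is_maximal_ideal V N \<longrightarrow> (\<forall>x\<in>V. \<exists>r\<in>R. x - r \<in> N)"
    and Aadd: "\<And>x y. x \<in> A \<Longrightarrow> y \<in> A \<Longrightarrow> x + y \<in> A"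
    and Amul: "\<And>c x. c \<in> R \<Longrightarrow> x \<in> A \<Longrightarrow> c * x \<in> A"
    and A0: "0 \<in> A"
    and AB: "A \<subseteq> B"
    and Bdiff: "\<And>x y. x \<in> B \<Longrightarrow> y \<in> B \<Longrightarrow> x - y \<in> B"
    and Bval: "\<And>b. b \<in> B \<Longrightarrow> b \<noteq> 0 \<Longrightarrow> \<exists>x\<in>A. x \<noteq> 0 \<and> v x = v b"
    and big: "\<And>y. y \<noteq> 0 \<Longrightarrow> v y \<ge> M \<Longrightarrow> y \<in> A"
  shows "B \<subseteq> A"
proof -
  have "b \<in> B \<Longrightarrow> b \<in> A" for b
  proof (induction "nat (M - v b)" arbitrary: b rule: less_induct)
    case (less b)
    show ?case
    proof (cases "b = 0")
      case True then show ?thesis using A0 by simp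
    next
      case b0: False
      show ?thesis
      proof (cases "v b \<ge> M")
        case True then show ?thesis using big b0 by blast
      next
        case small: False
        obtain x where x: "x \<in> A" "x \<noteq> 0" "v x = v b" using Bval less.prems b0 by blast
        obtain c where c: "c \<in> R" "b - c * x = 0 \<or> (b - c * x \<noteq> 0 \<and> v (b - c * x) > v b)"
          using residue[OF val res b0 x(2)] x(3) by metis
        have cx: "c * x \<in> A" using Amul c x by blast
        show ?thesis
        proof (cases "b - c * x = 0")
          case True then have "b = c * x" by simp
          then show ?thesis using cx by simp
        next
          case nz: False
          then have gt: "v (b - c * x) > v b" using c by blast
          have inB: "b - c * x \<in> B" using Bdiff less.prems AB cx by blast
          have "nat (M - v (b - c * x)) < nat (M - v b)" using gt small by simp
          then have "b - c * x \<in> A" using less.hyps inB by blast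
          then have "(b - c * x) + c * x \<in> A" using Aadd cx by blast
          then show ?thesis by simp
        qed
      qed
    qed
  qed
  then show ?thesis by blast
qed

lemma ideal_prod_single: "x \<in> A \<Longrightarrow> y \<in> B \<Longrightarrow> x * y \<in> ideal_prod A B"
  unfolding ideal_prod_def by (rule CollectI, rule exI[of _ "[(x,y)]"]) auto

lemma ideal_prod_sub:
  assumes "0 \<in> S" "\<And>x y. x\<in>S \<Longrightarrow> y\<in>S \<Longrightarrow> x+y\<in>S" "\<And>x y. x\<in>A \<Longrightarrow> y\<in>B \<Longrightarrow> x*y\<in>S"
  shows "ideal_prod A B \<subseteq> S"
proof
  fix z assume "z \<in> ideal_prod A B"
  then obtain ps where ps: "z = sum_list (map (\<lambda>(x,y). x*y) ps)" "set ps \<subseteq> A \<times> B"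
    unfolding ideal_prod_def by blast
  have "sum_list (map (\<lambda>(x,y). x*y) ps) \<in> S" using ps(2)
    by (induction ps) (auto simp: assms)
  then show "z \<in> S" using ps by simp
qed

lemma R_in_V:
  assumes subR: "subring R" and val: "normalized_valuation_of v (integral_closure R)"
    and r: "r \<in> R" shows "r = 0 \<or> 0 \<le> v r"
proof -
  have "r \<in> integral_closure R"
    unfolding integral_closure_def
  proof (intro CollectI exI[of _ "[:-r, 1:]"] conjI allI)
    fix i show "coeff [:-r, 1:] i \<in> R"
      using subR r by (cases i) (auto simp: subring_def coeff_pCons split: nat.split)
  qed auto
  then show ?thesis using nv_V[OF val] by auto
qed

theorem proposition3p4:
  fixes R :: "'a::field set" and v :: "'a \<Rightarrow> int" and a :: "nat \<Rightarrow> int" and n i :: nat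
  assumes subR: "subring R"
    and quot: "is_quotient_field_of R"
    and loc: "local_ring R"
    and noeth: "noetherian_ring R"
    and dim1: "krull_dim_one R"
    and fg: "fin_gen_module R (integral_closure R)"
    and locbar: "local_ring (integral_closure R)"
    and val: "normalized_valuation_of v (integral_closure R)"
    and resfield: "\<forall>N. is_maximal_ideal (integral_closure R) N \<longrightarrow>
                      (\<forall>x\<in>integral_closure R. \<exists>r\<in>R. x - r \<in> N)"
    and a_mono: "strict_mono a"
    and a_range: "range a = v ` (R - {0})"
    and n_def: "n = (LEAST m. \<forall>j. a (m + j) = a m + int j)"
    and i_ge: "1 \<le> i" and i_le: "i + 2 \<le> n"
  shows "((\<forall>r\<in>R. r \<noteq> 0 \<and> v r = a i \<longrightarrow>
             ideal_prod (val_ideal R v a i) (val_ideal R v a (i + 2)) = smul_set r (val_ideal R v a (i + 2)))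
          \<longleftrightarrow>
          (\<exists>q\<in>R. q \<noteq> 0 \<and> v q = a i \<and>
             ideal_prod (val_ideal R v a i) (val_ideal R v a (i + 2)) = smul_set q (val_ideal R v a (i + 2))))
       \<and>
       (\<forall>s\<in>R. i + 3 \<le> n \<and> s \<noteq> 0 \<and> v s = a (i + 1) \<and>
           ideal_prod (val_ideal R v a (i + 1)) (val_ideal R v a (i + 3)) = smul_set s (val_ideal R v a (i + 3))
         \<longrightarrow>
           ((\<forall>r\<in>R. r \<noteq> 0 \<and> v r = a i \<longrightarrow>
               ideal_prod (val_ideal R v a i) (val_ideal R v a (i + 2)) = smul_set r (val_ideal R v a (i + 2)))
            \<longleftrightarrow>
            (\<exists>q\<in>R. q \<noteq> 0 \<and> v q = a i \<and>
               smul_set s (val_ideal R v a (i + 2)) \<subseteq> smul_set q R)))"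
proof -
  define I where "I = val_ideal R v a"
  have R0: "0 \<in> R" and Radd: "\<And>x y. x \<in> R \<Longrightarrow> y \<in> R \<Longrightarrow> x + y \<in> R"
    and Rdiff: "\<And>x y. x \<in> R \<Longrightarrow> y \<in> R \<Longrightarrow> x - y \<in> R"
    and Rmul: "\<And>x y. x \<in> R \<Longrightarrow> y \<in> R \<Longrightarrow> x * y \<in> R"
    using subR unfolding subring_def by auto
  have RV: "\<And>r. r \<in> R \<Longrightarrow> r = 0 \<or> 0 \<le> v r" using R_in_V[OF subR val] by blast
  have Iiff: "x \<in> I j \<longleftrightarrow> x \<in> R \<and> (x = 0 \<or> a j \<le> v x)" for x j
    unfolding I_def val_ideal_def by simp
  have step: "a (Suc j) \<le> v x" if "x \<in> R" "x \<noteq> 0" "a j < v x" for x j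
  proof -
    have "v x \<in> range a" using a_range that by auto
    then obtain k where k: "v x = a k" by auto
    then have "j < k" using that(3) strict_mono_less[OF a_mono] by simp
    then have "Suc j \<le> k" by simp
    then show ?thesis using k strict_mono_less_eq[OF a_mono] by simp
  qed
  have amono: "j \<le> k \<Longrightarrow> a j \<le> a k" for j k using strict_mono_less_eq[OF a_mono] by simp
  have Imono: "j \<le> k \<Longrightarrow> I k \<subseteq> I j" for j k using amono Iiff by fastforce
  have Iadd: "x + y \<in> I j" if "x \<in> I j" "y \<in> I j" for x y j
  proof (cases "x = 0 \<or> y = 0 \<or> x + y = 0")
    case True then show ?thesis using that Iiff R0 by auto
  next
    case False then show ?thesis using that Iiff Radd nv_add[OF val, of x y] by auto
  qed
  have Idiff: "x - y \<in> I j" if "x \<in> I j" "y \<in> I j" for x y j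
  proof (cases "x = 0 \<or> y = 0 \<or> x - y = 0")
    case True then show ?thesis using that Iiff R0 Rdiff nv_uminus[OF val, of y] by auto
  next
    case False then show ?thesis using that Iiff Rdiff nv_diff[OF val, of x y] by auto
  qed
  have Imul: "c * x \<in> I j" if "c \<in> R" "x \<in> I j" for c x j
  proof (cases "c = 0 \<or> x = 0")
    case True then show ?thesis using that Iiff R0 by auto
  next
    case False then show ?thesis using that Iiff Rmul nv_mult[OF val, of c x] RV[of c] by auto
  qed
  have I0: "0 \<in> I j" for j using Iiff R0 by simp
  obtain C where C: "\<And>y. y \<noteq> 0 \<Longrightarrow> v y \<ge> C \<Longrightarrow> y \<in> R"
    using conductor[OF subR quot fg val] by blast
  have smul_iff: "z \<in> smul_set q S \<longleftrightarrow> (\<exists>y\<in>S. z = q * y)" for z q S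
    unfolding smul_set_def by auto

  have part1: "ideal_prod (I i) (I (i+2)) = smul_set r (I (i+2))"
    if q: "q \<in> R" "q \<noteq> 0" "v q = a i" and r: "r \<in> R" "r \<noteq> 0" "v r = a i"
      and hq: "ideal_prod (I i) (I (i+2)) = smul_set q (I (i+2))" for q r
  proof -
    define J where "J = I (i+2)"
    have rI: "r \<in> I i" using r Iiff by simp
    have AB: "smul_set r J \<subseteq> smul_set q J"
    proof
      fix z assume "z \<in> smul_set r J"
      then obtain y where y: "y \<in> J" "z = r * y" using smul_iff by blast
      have "z \<in> ideal_prod (I i) (I (i+2))" using ideal_prod_single[OF rI, of y] y J_def by simp
      then show "z \<in> smul_set q J" using hq J_def by simp
    qed
    define M where "M = max C (a (i+2)) + a i"
    have "smul_set q J \<subseteq> smul_set r J"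
    proof (rule approx[OF val resfield, where M = M])
      fix x y assume "x \<in> smul_set r J" "y \<in> smul_set r J"
      then obtain x' y' where "x' \<in> J" "y' \<in> J" "x = r * x'" "y = r * y'" using smul_iff by metis
      then show "x + y \<in> smul_set r J" using smul_iff Iadd J_def by (metis distrib_left)
    next
      fix c x assume "c \<in> R" "x \<in> smul_set r J"
      then obtain x' where "x' \<in> J" "x = r * x'" using smul_iff by metis
      then have "c * x = r * (c * x')" "c * x' \<in> J" using Imul J_def \<open>c \<in> R\<close> by (auto simp: algebra_simps)
      then show "c * x \<in> smul_set r J" using smul_iff by blast
    next
      show "0 \<in> smul_set r J" using smul_iff I0 J_def by force
    next
      show "smul_set r J \<subseteq> smul_set q J" by (rule AB)
    next
      fix x y assume "x \<in> smul_set q J" "y \<in> smul_set q J"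
      then obtain x' y' where "x' \<in> J" "y' \<in> J" "x = q * x'" "y = q * y'" using smul_iff by metis
      then show "x - y \<in> smul_set q J" using smul_iff Idiff J_def by (metis right_diff_distrib)
    next
      fix b assume "b \<in> smul_set q J" "b \<noteq> 0"
      then obtain y where y: "y \<in> J" "b = q * y" using smul_iff by metis
      then have y0: "y \<noteq> 0" using \<open>b \<noteq> 0\<close> by auto
      have "v (r * y) = v b" using y nv_mult[OF val r(2) y0] nv_mult[OF val q(2) y0] q r by simp
      moreover have "r * y \<in> smul_set r J" using y smul_iff by blast
      moreover have "r * y \<noteq> 0" using r y0 by simp
      ultimately show "\<exists>x\<in>smul_set r J. x \<noteq> 0 \<and> v x = v b" by blast
    next
      fix y assume y: "y \<noteq> 0" "M \<le> v y"
      have vd: "v (y / r) = v y - a i" using nv_div[OF val y(1) r(2)] r by simp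
      have yr0: "y / r \<noteq> 0" using y r by simp
      have "y / r \<in> R" using C[OF yr0] vd y M_def by simp
      moreover have "a (i+2) \<le> v (y / r)" using vd y M_def by simp
      ultimately have "y / r \<in> J" using Iiff J_def by simp
      moreover have "y = r * (y / r)" using r by simp
      ultimately show "y \<in> smul_set r J" using smul_iff by blast
    qed
    then show ?thesis using AB hq J_def by auto
  qed

  have ex_q: "\<exists>q\<in>R. q \<noteq> 0 \<and> v q = a i"
  proof -
    have "a i \<in> v ` (R - {0})" using a_range by (metis rangeI)
    then show ?thesis by auto
  qed

  have eq12: "(\<forall>r\<in>R. r \<noteq> 0 \<and> v r = a i \<longrightarrow> ideal_prod (I i) (I (i+2)) = smul_set r (I (i+2)))
     \<longleftrightarrow> (\<exists>q\<in>R. q \<noteq> 0 \<and> v q = a i \<and> ideal_prod (I i) (I (i+2)) = smul_set q (I (i+2)))"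
  proof
    assume h: "\<forall>r\<in>R. r \<noteq> 0 \<and> v r = a i \<longrightarrow> ideal_prod (I i) (I (i+2)) = smul_set r (I (i+2))"
    obtain q where q: "q \<in> R" "q \<noteq> 0" "v q = a i" using ex_q by blast
    moreover have "ideal_prod (I i) (I (i+2)) = smul_set q (I (i+2))"
      by (rule h[rule_format]) (use q in auto)
    ultimately show "\<exists>q\<in>R. q \<noteq> 0 \<and> v q = a i \<and> ideal_prod (I i) (I (i+2)) = smul_set q (I (i+2))"
      by blast
  next
    assume "\<exists>q\<in>R. q \<noteq> 0 \<and> v q = a i \<and> ideal_prod (I i) (I (i+2)) = smul_set q (I (i+2))"
    then obtain q where q: "q \<in> R" "q \<noteq> 0" "v q = a i"
      and hq: "ideal_prod (I i) (I (i+2)) = smul_set q (I (i+2))" by blast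
    show "\<forall>r\<in>R. r \<noteq> 0 \<and> v r = a i \<longrightarrow> ideal_prod (I i) (I (i+2)) = smul_set r (I (i+2))"
    proof (intro ballI impI)
      fix r assume r: "r \<in> R" "r \<noteq> 0 \<and> v r = a i"
      show "ideal_prod (I i) (I (i+2)) = smul_set r (I (i+2))"
        by (rule part1[OF q r(1) conjunct1[OF r(2)] conjunct2[OF r(2)] hq])
    qed
  qed

  have part3: "(\<forall>r\<in>R. r \<noteq> 0 \<and> v r = a i \<longrightarrow> ideal_prod (I i) (I (i+2)) = smul_set r (I (i+2)))
     \<longleftrightarrow> (\<exists>q\<in>R. q \<noteq> 0 \<and> v q = a i \<and> smul_set s (I (i+2)) \<subseteq> smul_set q R)"
    if s: "s \<in> R" "s \<noteq> 0" "v s = a (i+1)"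
      and hs: "ideal_prod (I (i+1)) (I (i+3)) = smul_set s (I (i+3))" for s
  proof
    assume h1: "\<forall>r\<in>R. r \<noteq> 0 \<and> v r = a i \<longrightarrow> ideal_prod (I i) (I (i+2)) = smul_set r (I (i+2))"
    obtain q where q: "q \<in> R" "q \<noteq> 0" "v q = a i" using ex_q by blast
    have hq: "ideal_prod (I i) (I (i+2)) = smul_set q (I (i+2))" by (rule h1[rule_format]) (use q in auto)
    have sI: "s \<in> I i" using s Iiff amono[of i "i+1"] by simp
    have "smul_set s (I (i+2)) \<subseteq> smul_set q R"
    proof
      fix z assume "z \<in> smul_set s (I (i+2))"
      then obtain y where y: "y \<in> I (i+2)" "z = s * y" using smul_iff by blast
      have "z \<in> smul_set q (I (i+2))" using ideal_prod_single[OF sI y(1)] y hq by simp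
      then obtain y' where "y' \<in> I (i+2)" "z = q * y'" using smul_iff by blast
      then show "z \<in> smul_set q R" using smul_iff Iiff by blast
    qed
    then show "\<exists>q\<in>R. q \<noteq> 0 \<and> v q = a i \<and> smul_set s (I (i+2)) \<subseteq> smul_set q R" using q by blast
  next
    assume "\<exists>q\<in>R. q \<noteq> 0 \<and> v q = a i \<and> smul_set s (I (i+2)) \<subseteq> smul_set q R"
    then obtain q where q: "q \<in> R" "q \<noteq> 0" "v q = a i" and sq: "smul_set s (I (i+2)) \<subseteq> smul_set q R"
      by blast
    have key: "x * y \<in> smul_set q (I (i+2))" if x: "x \<in> I (i+1)" and y: "y \<in> I (i+2)" for x y
    proof (cases "y = 0")
      case True then show ?thesis using smul_iff I0 by force
    next
      case y0: False
      have "s * y \<in> smul_set q R" using sq y smul_iff by blast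
      then obtain e where e: "e \<in> R" "s * y = q * e" using smul_iff by blast
      have e0: "e \<noteq> 0" using e s y0 q by auto
      have "v (s * y) = v (q * e)" using e by simp
      then have "v s + v y = v q + v e" using nv_mult[OF val s(2) y0] nv_mult[OF val q(2) e0] by simp
      moreover have "v y \<ge> a (i+2)" using y y0 Iiff by simp
      moreover have "a i < a (i+1)" using a_mono by (simp add: strict_mono_def)
      ultimately have "v e > a (i+2)" using s q by simp
      then have "a (Suc (i+2)) \<le> v e" using step e e0 by blast
      then have eI: "e \<in> I (i+3)" using e Iiff by (simp add: numeral_3_eq_3)
      have "x * e \<in> smul_set s (I (i+3))" using ideal_prod_single[OF x eI] hs by simp
      then obtain z where z: "z \<in> I (i+3)" "x * e = s * z" using smul_iff by blast
      have "s * (x * y) = s * (q * z)"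
      proof -
        have "s * (x * y) = x * (s * y)" by simp
        also have "\<dots> = q * (x * e)" using e by simp
        also have "\<dots> = s * (q * z)" using z by simp
        finally show ?thesis .
      qed
      then have "x * y = q * z" using s by simp
      moreover have "z \<in> I (i+2)" using z Imono[of "i+2" "i+3"] by auto
      ultimately show ?thesis using smul_iff by blast
    qed
    have hq: "ideal_prod (I i) (I (i+2)) = smul_set q (I (i+2))"
    proof
      show "ideal_prod (I i) (I (i+2)) \<subseteq> smul_set q (I (i+2))"
      proof (rule ideal_prod_sub)
        show "0 \<in> smul_set q (I (i+2))" using smul_iff I0 by force
      next
        fix x y assume "x \<in> smul_set q (I (i+2))" "y \<in> smul_set q (I (i+2))"
        then obtain x' y' where "x' \<in> I (i+2)" "y' \<in> I (i+2)" "x = q * x'" "y = q * y'" using smul_iff by metis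
        then show "x + y \<in> smul_set q (I (i+2))" using smul_iff Iadd by (metis distrib_left)
      next
        fix x y assume x: "x \<in> I i" and y: "y \<in> I (i+2)"
        have xR: "x \<in> R" using x unfolding Iiff by blast
        have "\<exists>c\<in>R. x - c * q \<in> I (i+1)"
        proof (cases "x = 0 \<or> v x \<noteq> a i")
          case True
          have "x \<in> I (i+1)"
          proof (cases "x = 0")
            case True then show ?thesis using I0 by simp
          next
            case x0: False
            have "a i \<le> v x" using x x0 unfolding Iiff by blast
            then have "a i < v x" using True x0 by auto
            then have "a (Suc i) \<le> v x" using step[OF xR x0] by blast
            then show ?thesis using xR unfolding Iiff by simp
          qed
          then have "x - 0 * q \<in> I (i+1)" by simp
          then show ?thesis using R0 by (rule bexI)
        next
          case False
          then have x0: "x \<noteq> 0" and "v x = a i" by auto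
          then have vxq: "v x = v q" using q(3) by simp
          have "\<exists>c\<in>R. x - c * q = 0 \<or> (x - c * q \<noteq> 0 \<and> v (x - c * q) > v x)"
            by (rule residue[OF val resfield x0 q(2) vxq])
          then obtain c where c: "c \<in> R" "x - c * q = 0 \<or> (x - c * q \<noteq> 0 \<and> v (x - c * q) > v x)" ..
          have xcR: "x - c * q \<in> R" using Rdiff[OF xR Rmul[OF c(1) q(1)]] .
          have "x - c * q \<in> I (i+1)"
          proof (cases "x - c * q = 0")
            case True then show ?thesis using I0 by simp
          next
            case nz: False
            then have "a i < v (x - c * q)" using c False by auto
            then have "a (Suc i) \<le> v (x - c * q)" using step[OF xcR nz] by blast
            then show ?thesis using xcR unfolding Iiff by simp
          qed
          then show ?thesis using c(1) by (rule bexI)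
        qed
        then obtain c where c: "c \<in> R" "x - c * q \<in> I (i+1)" by blast
        obtain z where z: "z \<in> I (i+2)" "(x - c * q) * y = q * z"
          using key[OF c(2) y] smul_iff by blast
        have "x * y = q * (c * y + z)"
        proof -
          have "x * y = (x - c * q) * y + q * (c * y)" by (simp add: algebra_simps)
          also have "\<dots> = q * (c * y + z)" using z by (simp add: algebra_simps)
          finally show ?thesis .
        qed
        moreover have "c * y + z \<in> I (i+2)" using Iadd Imul c y z by blast
        ultimately show "x * y \<in> smul_set q (I (i+2))" using smul_iff by blast
      qed
    next
      have qI: "q \<in> I i" using q Iiff by simp
      show "smul_set q (I (i+2)) \<subseteq> ideal_prod (I i) (I (i+2))"
      proof
        fix z assume "z \<in> smul_set q (I (i+2))"
        then obtain y where y: "y \<in> I (i+2)" "z = q * y" unfolding smul_iff by blast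
        show "z \<in> ideal_prod (I i) (I (i+2))" unfolding y(2) by (rule ideal_prod_single[OF qI y(1)])
      qed
    qed
    show "\<forall>r\<in>R. r \<noteq> 0 \<and> v r = a i \<longrightarrow> ideal_prod (I i) (I (i+2)) = smul_set r (I (i+2))"
    proof (intro ballI impI)
      fix r assume r: "r \<in> R" "r \<noteq> 0 \<and> v r = a i"
      show "ideal_prod (I i) (I (i+2)) = smul_set r (I (i+2))"
        by (rule part1[OF q r(1) conjunct1[OF r(2)] conjunct2[OF r(2)] hq])
    qed
  qed

  show ?thesis
  proof (intro conjI ballI impI)
    show "(\<forall>r\<in>R. r \<noteq> 0 \<and> v r = a i \<longrightarrow>
             ideal_prod (val_ideal R v a i) (val_ideal R v a (i + 2)) = smul_set r (val_ideal R v a (i + 2)))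
          \<longleftrightarrow>
          (\<exists>q\<in>R. q \<noteq> 0 \<and> v q = a i \<and>
             ideal_prod (val_ideal R v a i) (val_ideal R v a (i + 2)) = smul_set q (val_ideal R v a (i + 2)))"
      using eq12 unfolding I_def .
  next
    fix s assume "s \<in> R" and hs: "i + 3 \<le> n \<and> s \<noteq> 0 \<and> v s = a (i + 1) \<and>
           ideal_prod (val_ideal R v a (i + 1)) (val_ideal R v a (i + 3)) = smul_set s (val_ideal R v a (i + 3))"
    then show "(\<forall>r\<in>R. r \<noteq> 0 \<and> v r = a i \<longrightarrow>
               ideal_prod (val_ideal R v a i) (val_ideal R v a (i + 2)) = smul_set r (val_ideal R v a (i + 2)))
            \<longleftrightarrow>
            (\<exists>q\<in>R. q \<noteq> 0 \<and> v q = a i \<and>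
               smul_set s (val_ideal R v a (i + 2)) \<subseteq> smul_set q R)"
    proof -
      have h4: "ideal_prod (I (i+1)) (I (i+3)) = smul_set s (I (i+3))" using hs unfolding I_def by blast
      have "s \<noteq> 0" "v s = a (i+1)" using hs by blast+
      from part3[OF \<open>s \<in> R\<close> this h4] show ?thesis unfolding I_def by assumption
    qed
  qed
qed

end
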